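(* $\mathrm{PMC}=\mathrm{PMC[T]}\subset\mathrm{PMC[O]}=\mathrm{PMC[T,O]}$, where $\subset$ denotes proper inclusion.
   Context: An indexed family is a sequence $\mathcal F=(F_n)_{n\in\mathbb N}$ of subsets of $\mathbb N$ that is uniformly computably enumerable; $F\in\mathcal F$ means $F=F_n$ for some $n$, and $\mathrm{mi}_{\mathcal F}(F)$ is the least $n$ with $F_n=F$. An enumeration of a nonempty set $A$ is an infinite sequence of elements of $A$ in which every element of $A$ occurs; $f\restriction n$ is its initial segment of length $n$, and $\mathrm{content}(\sigma)$ is the set of entries of a finite string $\sigma$. A learner is a partial computable function from finite strings of naturals to naturals; hypothesis $h$ is interpreted as $F_h$. $\mathcal F$ is PMC-learnable if there are a learner $M$ and a polynomial $p$ such that for every $F\in\mathcal F$ and every enumeration $f$ of $F$, the hypothesis stream $g(i)=M(f\restriction i)$ satisfies $|\{i: g(i)\neq g(i+1)\}|\le p(\mathrm{mi}_{\mathcal F}(F))$ and the only value occurring infinitely often in $g$ is an index of $F$; if an oracle is used, the number of oracle queries is also bounded by $p(\mathrm{mi}_{\mathcal F}(F))$. A teacher is a computable map $T$ on finite strings with $T(\sigma)$ a prefix of $T(\tau)$ whenever $\sigma$ is a prefix of $\tau$, and $\mathrm{content}(T(\sigma))\subseteq\mathrm{content}(\sigma)$. PMC[O]-learnable: some learner with a membership oracle for the target set PMC-learns $\mathcal F$. PMC[T]-learnable: there is a learner-teacher pair $(M,T)$ such that $M$, fed $T(f\restriction n)$ in place of $f\restriction n$, meets the PMC criterion for every enumeration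 $f$ of every member of $\mathcal F$. PMC[T,O]-learnable: as for PMC[T], but $M$ additionally has a membership oracle for the target and $T$ has access to the oracle answers $M$ receives. PMC, PMC[O], PMC[T], PMC[T,O] denote the corresponding classes of indexed families. *)

theory Defs
  imports Main "HOL-Library.Nat_Bijection" "HOL-Library.Sublist"
    "HOL-Computational_Algebra.Polynomial"
begin

datatype recf = Z | S | Proj nat | Comp recf "recf list" | Prec recf recf | Mn recf

inductive eval :: "recf \<Rightarrow> nat list \<Rightarrow> nat \<Rightarrow> bool" where
  eval_Z: "eval Z xs 0"
| eval_S: "eval S (x # xs) (Suc x)"
| eval_Proj: "i < length xs \<Longrightarrow> eval (Proj i) xs (xs ! i)"
| eval_Comp: "list_all2 (\<lambda>g y. eval g xs y) gs ys \<Longrightarrow> eval f ys v \<Longrightarrow> eval (Comp f gs) xs v"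
| eval_Prec0: "eval f xs v \<Longrightarrow> eval (Prec f g) (0 # xs) v"
| eval_PrecS: "eval (Prec f g) (n # xs) r \<Longrightarrow> eval g (r # n # xs) v
               \<Longrightarrow> eval (Prec f g) (Suc n # xs) v"
| eval_Mn: "eval f (n # xs) 0 \<Longrightarrow> (\<forall>m<n. \<exists>r. eval f (m # xs) r \<and> r \<noteq> 0)
               \<Longrightarrow> eval (Mn f) xs n"

text \<open>Uniformly computably enumerable: F_n = domain of \<lambda>x. phi(n,x) for one partial
  computable phi.\<close>
definition indexed_family :: "(nat \<Rightarrow> nat set) \<Rightarrow> bool" where
  "indexed_family fam \<longleftrightarrow> (\<exists>e. \<forall>n x. x \<in> fam n \<longleftrightarrow> (\<exists>v. eval e [n, x] v))"

definition mi :: "(nat \<Rightarrow> nat set) \<Rightarrow> nat set \<Rightarrow> nat" where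
  "mi fam F = (LEAST n. fam n = F)"

definition seg :: "(nat \<Rightarrow> nat) \<Rightarrow> nat \<Rightarrow> nat list" where
  "seg f n = map f [0..<n]"

definition good_stream :: "(nat \<Rightarrow> nat set) \<Rightarrow> nat set \<Rightarrow> nat poly \<Rightarrow> (nat \<Rightarrow> nat) \<Rightarrow> bool" where
  "good_stream fam F p g \<longleftrightarrow>
     finite {i. g i \<noteq> g (Suc i)} \<and>
     card {i. g i \<noteq> g (Suc i)} \<le> poly p (mi fam F) \<and>
     (\<forall>v. infinite {i. g i = v} \<longrightarrow> fam v = F)"

definition teacher :: "(nat list \<Rightarrow> nat list) \<Rightarrow> bool" where
  "teacher T \<longleftrightarrow>
     (\<exists>t. \<forall>\<sigma>. eval t [list_encode \<sigma>] (list_encode (T \<sigma>))) \<and>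
     (\<forall>\<sigma> \<tau>. prefix \<sigma> \<tau> \<longrightarrow> prefix (T \<sigma>) (T \<tau>)) \<and>
     (\<forall>\<sigma>. set (T \<sigma>) \<subseteq> set \<sigma>)"

text \<open>A query log records the queried numbers together with the oracle answers.\<close>
type_synonym qlog = "(nat \<times> bool) list"

definition enc_log :: "qlog \<Rightarrow> nat" where
  "enc_log l = list_encode (map (\<lambda>(x, b). prod_encode (x, if b then 1 else 0)) l)"

text \<open>An oracle learner with code e is called on (data string, query log so far). An
  output 2*h means "hypothesis h", an output 2*x+1 means "query whether x is in the
  target". qrun e A \<sigma> l l' h: starting from log l on data \<sigma>, with membership oracle A,
  the learner eventually outputs hypothesis h, and the log is then l'.\<close>
inductive qrun :: "recf \<Rightarrow> nat set \<Rightarrow> nat list \<Rightarrow> qlog \<Rightarrow> qlog \<Rightarrow> nat \<Rightarrow> bool" where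
  qrun_hyp: "eval e [list_encode \<sigma>, enc_log l] (2 * h) \<Longrightarrow> qrun e A \<sigma> l l h"
| qrun_query: "eval e [list_encode \<sigma>, enc_log l] (2 * x + 1) \<Longrightarrow>
               qrun e A \<sigma> (l @ [(x, x \<in> A)]) l' h \<Longrightarrow> qrun e A \<sigma> l l' h"

text \<open>A teacher with access to the oracle answers the learner received.\<close>
definition oteacher :: "(nat list \<Rightarrow> qlog \<Rightarrow> nat list) \<Rightarrow> bool" where
  "oteacher T \<longleftrightarrow>
     (\<exists>t. \<forall>\<sigma> l. eval t [list_encode \<sigma>, enc_log l] (list_encode (T \<sigma> l))) \<and>
     (\<forall>\<sigma> \<tau> l l'. prefix \<sigma> \<tau> \<longrightarrow> prefix l l' \<longrightarrow> prefix (T \<sigma> l) (T \<tau> l')) \<and>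
     (\<forall>\<sigma> l. set (T \<sigma> l) \<subseteq> set \<sigma>)"

definition PMC_learnable :: "(nat \<Rightarrow> nat set) \<Rightarrow> bool" where
  "PMC_learnable fam \<longleftrightarrow> (\<exists>e p. \<forall>F \<in> range fam. \<forall>f. range f = F \<longrightarrow>
     (\<exists>g. (\<forall>i. eval e [list_encode (seg f i)] (g i)) \<and> good_stream fam F p g))"

definition PMC_T_learnable :: "(nat \<Rightarrow> nat set) \<Rightarrow> bool" where
  "PMC_T_learnable fam \<longleftrightarrow> (\<exists>e p T. teacher T \<and> (\<forall>F \<in> range fam. \<forall>f. range f = F \<longrightarrow>
     (\<exists>g. (\<forall>i. eval e [list_encode (T (seg f i))] (g i)) \<and> good_stream fam F p g)))"

definition PMC_O_learnable :: "(nat \<Rightarrow> nat set) \<Rightarrow> bool" where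
  "PMC_O_learnable fam \<longleftrightarrow> (\<exists>e p. \<forall>F \<in> range fam. \<forall>f. range f = F \<longrightarrow>
     (\<exists>L g. L 0 = [] \<and> (\<forall>i. qrun e F (seg f i) (L i) (L (Suc i)) (g i)) \<and>
            good_stream fam F p g \<and> (\<forall>i. length (L i) \<le> poly p (mi fam F))))"

definition PMC_TO_learnable :: "(nat \<Rightarrow> nat set) \<Rightarrow> bool" where
  "PMC_TO_learnable fam \<longleftrightarrow> (\<exists>e p T. oteacher T \<and> (\<forall>F \<in> range fam. \<forall>f. range f = F \<longrightarrow>
     (\<exists>L g. L 0 = [] \<and> (\<forall>i. qrun e F (T (seg f i) (L i)) (L i) (L (Suc i)) (g i)) \<and>
            good_stream fam F p g \<and> (\<forall>i. length (L i) \<le> poly p (mi fam F)))))"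

definition PMC :: "(nat \<Rightarrow> nat set) set" where
  "PMC = {fam. indexed_family fam \<and> PMC_learnable fam}"
definition PMC_T :: "(nat \<Rightarrow> nat set) set" where
  "PMC_T = {fam. indexed_family fam \<and> PMC_T_learnable fam}"
definition PMC_O :: "(nat \<Rightarrow> nat set) set" where
  "PMC_O = {fam. indexed_family fam \<and> PMC_O_learnable fam}"
definition PMC_TO :: "(nat \<Rightarrow> nat set) set" where
  "PMC_TO = {fam. indexed_family fam \<and> PMC_TO_learnable fam}"

end

theory Submission
  imports Defs
begin

inductive_cases evZE: "eval Z xs v"
inductive_cases evSE: "eval S xs v"
inductive_cases evProjE: "eval (Proj i) xs v"
inductive_cases evCompE: "eval (Comp f gs) xs v"
inductive_cases evPrec0E: "eval (Prec f g) (0 # xs) v"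
inductive_cases evPrecSE: "eval (Prec f g) (Suc n # xs) v"
inductive_cases evMnE: "eval (Mn f) xs v"

lemma la2_det:
  "list_all2 (\<lambda>g y. eval g xs y \<and> (\<forall>w. eval g xs w \<longrightarrow> y = w)) gs ys \<Longrightarrow>
   list_all2 (\<lambda>g y. eval g xs y) gs ys' \<Longrightarrow> ys = ys'"
proof (induction gs arbitrary: ys ys')
  case Nil thus ?case by auto
next
  case (Cons a gs)
  from Cons.prems obtain y yr where y: "ys = y # yr" by (cases ys) auto
  from Cons.prems obtain y' yr' where y': "ys' = y' # yr'" by (cases ys') auto
  show ?case using Cons y y' by auto
qed

lemma eval_det: "eval c xs v \<Longrightarrow> eval c xs w \<Longrightarrow> v = w"
proof (induction arbitrary: w rule: eval.induct)
  case (eval_Z xs) thus ?case by (metis evZE)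
next
  case (eval_S x xs) thus ?case by (metis evSE list.inject)
next
  case (eval_Proj i xs) thus ?case by (metis evProjE)
next
  case (eval_Comp xs gs ys f v)
  from eval_Comp.prems obtain ys' where a: "list_all2 (\<lambda>g y. eval g xs y) gs ys'" and b: "eval f ys' w"
    by (auto elim: evCompE)
  have "ys = ys'" using la2_det[OF eval_Comp.IH(1) a] .
  thus ?case using eval_Comp.IH(2) b by auto
next
  case (eval_Prec0 f xs v g)
  thus ?case by (metis evPrec0E nat.distinct(1))
next
  case (eval_PrecS f g n xs r v)
  from eval_PrecS.prems obtain r' where "eval (Prec f g) (n # xs) r'" "eval g (r' # n # xs) w"
    by (auto elim: evPrecSE)
  thus ?case using eval_PrecS.IH by metis
next
  case (eval_Mn f n xs)
  from eval_Mn.prems have w0: "eval f (w # xs) 0" and wl: "\<forall>m<w. \<exists>r. eval f (m # xs) r \<and> r \<noteq> 0"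
    by (auto elim: evMnE)
  show ?case
  proof (rule ccontr)
    assume "n \<noteq> w"
    hence "w < n \<or> n < w" by auto
    thus False
    proof
      assume "w < n"
      then obtain r where "eval f (w # xs) r" "\<forall>w'. eval f (w # xs) w' \<longrightarrow> r = w'" "r \<noteq> 0"
        using eval_Mn.IH(2) by meson
      thus False using w0 by auto
    next
      assume "n < w"
      then obtain r where "eval f (n # xs) r" "r \<noteq> 0" using wl by blast
      thus False using eval_Mn.IH(1) by auto
    qed
  qed
qed

lemma eval_Prec_all:
  assumes "eval f xs (h 0)" "\<And>n. eval g (h n # n # xs) (h (Suc n))"
  shows "eval (Prec f g) (n # xs) (h n)"
proof (induction n)
  case 0 thus ?case using assms(1) by (rule eval_Prec0)
next
  case (Suc n) thus ?case using assms(2) by (rule eval_PrecS)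
qed

lemma eval_Prec_upto:
  assumes "eval f xs (h 0)" "\<And>n. n < N \<Longrightarrow> eval g (h n # n # xs) (h (Suc n))"
  shows "n \<le> N \<Longrightarrow> eval (Prec f g) (n # xs) (h n)"
proof (induction n)
  case 0 show ?case by (rule eval_Prec0[OF assms(1)])
next
  case (Suc n)
  hence "eval (Prec f g) (n # xs) (h n)" "n < N" by auto
  thus ?case using assms(2) eval_PrecS by blast
qed

lemma eval_Comp1: "eval a xs x \<Longrightarrow> eval f [x] v \<Longrightarrow> eval (Comp f [a]) xs v"
  by (rule eval_Comp) auto
lemma eval_Comp2: "eval a xs x \<Longrightarrow> eval b xs y \<Longrightarrow> eval f [x, y] v \<Longrightarrow> eval (Comp f [a, b]) xs v"
  by (rule eval_Comp) auto
lemma eval_Comp3: "eval a xs x \<Longrightarrow> eval b xs y \<Longrightarrow> eval c xs z \<Longrightarrow> eval f [x, y, z] v \<Longrightarrow> eval (Comp f [a, b, c]) xs v"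
  by (rule eval_Comp) auto
lemma eval_Comp4: "eval a xs x \<Longrightarrow> eval b xs y \<Longrightarrow> eval c xs z \<Longrightarrow> eval d xs u \<Longrightarrow> eval f [x, y, z, u] v \<Longrightarrow> eval (Comp f [a, b, c, d]) xs v"
  by (rule eval_Comp) auto

lemma eval_P0: "eval (Proj 0) (x # xs) x" using eval_Proj[of 0 "x#xs"] by simp
lemma eval_P1: "eval (Proj 1) (x # y # xs) y" using eval_Proj[of 1 "x#y#xs"] by simp
lemma eval_P2: "eval (Proj 2) (x # y # z # xs) z" using eval_Proj[of 2 "x#y#z#xs"] by simp
lemma eval_P3: "eval (Proj 3) (x # y # z # u # xs) u" using eval_Proj[of 3 "x#y#z#u#xs"] by (simp add: numeral_eq_Suc)
lemma eval_P4: "eval (Proj 4) (x # y # z # u # w # xs) w" using eval_Proj[of 4 "x#y#z#u#w#xs"] by (simp add: numeral_eq_Suc)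

primrec cn :: "nat \<Rightarrow> recf" where
  "cn 0 = Z" | "cn (Suc k) = Comp S [cn k]"

lemma eval_cn: "eval (cn k) xs k"
proof (induction k)
  case 0 show ?case by (simp add: eval_Z)
next
  case (Suc k) show ?case using eval_Comp1[OF Suc eval_S[of k "[]"]] by simp
qed

definition "ADDc = Comp (Prec (Proj 0) (Comp S [Proj 0])) [Proj 1, Proj 0]"
lemma eval_ADDc: "eval ADDc [a, b] (a + b)"
proof -
  have "eval (Prec (Proj 0) (Comp S [Proj 0])) (n # [a]) ((\<lambda>n. a + n) n)" for n
  proof (rule eval_Prec_all)
    show "eval (Proj 0) [a] (a + 0)" using eval_P0[of a "[]"] by simp
    fix n show "eval (Comp S [Proj 0]) ((a + n) # n # [a]) (a + Suc n)"
      using eval_Comp1[OF eval_P0 eval_S[of _ "[]"], of "a + n" "n # [a]"] by simp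
  qed
  from this[of b] show ?thesis unfolding ADDc_def
    by (rule eval_Comp2[OF eval_P1[of a b "[]"] eval_P0[of a "[b]"]])
qed

definition "MULc = Comp (Prec Z (Comp ADDc [Proj 0, Proj 2])) [Proj 1, Proj 0]"
lemma eval_MULc: "eval MULc [a, b] (a * b)"
proof -
  have "eval (Prec Z (Comp ADDc [Proj 0, Proj 2])) (n # [a]) ((\<lambda>n. a * n) n)" for n
  proof (rule eval_Prec_all)
    show "eval Z [a] (a * 0)" using eval_Z by simp
    fix n show "eval (Comp ADDc [Proj 0, Proj 2]) ((a * n) # n # [a]) (a * Suc n)"
      apply (rule eval_Comp2, rule eval_P0, rule eval_P2)
      using eval_ADDc[of "a * n" a] by (simp add: add.commute)
  qed
  from this[of b] show ?thesis unfolding MULc_def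
    by (rule eval_Comp2[OF eval_P1[of a b "[]"] eval_P0[of a "[b]"]])
qed

definition "PREDc = Comp (Prec Z (Proj 1)) [Proj 0]"
lemma eval_PREDc: "eval PREDc [a] (a - 1)"
proof -
  have "eval (Prec Z (Proj 1)) (n # []) ((\<lambda>n. n - 1) n)" for n
  proof (rule eval_Prec_all)
    show "eval Z [] (0 - 1)" using eval_Z by simp
    fix n show "eval (Proj 1) ((n - 1) # n # []) (Suc n - 1)"
      using eval_P1[of "n - 1" n "[]"] by simp
  qed
  from this[of a] show ?thesis unfolding PREDc_def
    by (rule eval_Comp1[OF eval_P0[of a "[]"]])
qed

definition "SUBc = Comp (Prec (Proj 0) (Comp PREDc [Proj 0])) [Proj 1, Proj 0]"
lemma eval_SUBc: "eval SUBc [a, b] (a - b)"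
proof -
  have "eval (Prec (Proj 0) (Comp PREDc [Proj 0])) (n # [a]) ((\<lambda>n. a - n) n)" for n
  proof (rule eval_Prec_all)
    show "eval (Proj 0) [a] (a - 0)" using eval_P0[of a "[]"] by simp
    fix n show "eval (Comp PREDc [Proj 0]) ((a - n) # n # [a]) (a - Suc n)"
      apply (rule eval_Comp1, rule eval_P0)
      using eval_PREDc[of "a - n"] by (metis diff_Suc_eq_diff_pred diff_commute)
  qed
  from this[of b] show ?thesis unfolding SUBc_def
    by (rule eval_Comp2[OF eval_P1[of a b "[]"] eval_P0[of a "[b]"]])
qed

definition "TRIc = Comp (Prec Z (Comp ADDc [Proj 0, Comp S [Proj 1]])) [Proj 0]"
lemma eval_TRIc: "eval TRIc [a] (triangle a)"
proof -
  have "eval (Prec Z (Comp ADDc [Proj 0, Comp S [Proj 1]])) (n # []) (triangle n)" for n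
  proof (rule eval_Prec_all[where h=triangle])
    show "eval Z [] (triangle 0)" using eval_Z by simp
    fix n show "eval (Comp ADDc [Proj 0, Comp S [Proj 1]]) (triangle n # n # []) (triangle (Suc n))"
      apply (rule eval_Comp2, rule eval_P0, rule eval_Comp1, rule eval_P1, rule eval_S)
      using eval_ADDc[of "triangle n" "Suc n"] by simp
  qed
  from this[of a] show ?thesis unfolding TRIc_def
    by (rule eval_Comp1[OF eval_P0[of a "[]"]])
qed

lemma ev_eq: "eval c xs v \<Longrightarrow> v = w \<Longrightarrow> eval c xs w" by simp

definition "WSc = Mn (Comp SUBc [Comp S [Proj 1], Comp TRIc [Comp S [Proj 0]]])"

lemma eval_WSc_f: "eval (Comp SUBc [Comp S [Proj 1], Comp TRIc [Comp S [Proj 0]]]) (m # [n]) (Suc n - triangle (Suc m))"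
  apply (rule eval_Comp2, rule eval_Comp1, rule eval_P1, rule eval_S, rule eval_Comp1, rule eval_Comp1, rule eval_P0, rule eval_S, rule eval_TRIc)
  by (rule eval_SUBc)

definition wof :: "nat \<Rightarrow> nat" where "wof n = (LEAST w. n < triangle (Suc w))"

lemma wof_ex: "n < triangle (Suc n)"
  by (simp only: triangle_Suc)

lemma wof_props: "n < triangle (Suc (wof n))" "triangle (wof n) \<le> n"
proof -
  show "n < triangle (Suc (wof n))" unfolding wof_def using wof_ex by (rule LeastI)
  show "triangle (wof n) \<le> n"
  proof (cases "wof n")
    case 0 thus ?thesis by simp
  next
    case (Suc k)
    have "\<not> n < triangle (Suc k)" using Suc unfolding wof_def
      by (intro not_less_Least[where P="\<lambda>w. n < triangle (Suc w)"]) simp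
    thus ?thesis using Suc by simp
  qed
qed

lemma eval_WSc: "eval WSc [n] (wof n)"
  unfolding WSc_def
proof (rule eval_Mn)
  show "eval (Comp SUBc [Comp S [Proj 1], Comp TRIc [Comp S [Proj 0]]]) [wof n, n] 0"
    using eval_WSc_f[of "wof n" n] wof_props(1)[of n] by simp
  show "\<forall>m<wof n. \<exists>r. eval (Comp SUBc [Comp S [Proj 1], Comp TRIc [Comp S [Proj 0]]]) [m, n] r \<and> r \<noteq> 0"
  proof (intro allI impI)
    fix m assume "m < wof n"
    hence "\<not> n < triangle (Suc m)" unfolding wof_def using not_less_Least by blast
    thus "\<exists>r. eval (Comp SUBc [Comp S [Proj 1], Comp TRIc [Comp S [Proj 0]]]) [m, n] r \<and> r \<noteq> 0"
      using eval_WSc_f[of m n] by auto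
  qed
qed

lemma pdec_wof: "prod_decode n = (n - triangle (wof n), wof n - (n - triangle (wof n)))"
proof -
  let ?w = "wof n" let ?a = "n - triangle ?w"
  have "?a \<le> ?w" using wof_props[of n] by simp
  hence "prod_encode (?a, ?w - ?a) = n" using wof_props[of n] by (simp add: prod_encode_def)
  thus ?thesis by (metis prod_encode_inverse)
qed

definition "FSTc = Comp SUBc [Proj 0, Comp TRIc [WSc]]"
definition "SNDc = Comp SUBc [WSc, FSTc]"

lemma eval_FSTc: "eval FSTc [n] (fst (prod_decode n))"
  unfolding FSTc_def
  apply (rule eval_Comp2, rule eval_P0, rule eval_Comp1, rule eval_WSc, rule eval_TRIc)
  apply (subst pdec_wof, subst fst_conv) by (rule eval_SUBc)

lemma eval_SNDc: "eval SNDc [n] (snd (prod_decode n))"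
  unfolding SNDc_def
  apply (rule eval_Comp2, rule eval_WSc, rule eval_FSTc)
  using eval_SUBc[of "wof n" "fst (prod_decode n)"] by (simp only: pdec_wof fst_conv snd_conv)

definition "add a b = Comp ADDc [a, b]"
definition "mul a b = Comp MULc [a, b]"
definition "sub a b = Comp SUBc [a, b]"
definition "suc a = Comp S [a]"
definition "pe a b = add (Comp TRIc [add a b]) a"
definition "dfst a = Comp FSTc [a]"
definition "dsnd a = Comp SNDc [a]"
definition "ifz c a b = add (mul (sub (cn 1) c) a) (mul (sub (cn 1) (sub (cn 1) c)) b)"

lemma ev_add: "eval a xs x \<Longrightarrow> eval b xs y \<Longrightarrow> eval (add a b) xs (x + y)"
  unfolding add_def by (rule eval_Comp2, assumption, assumption, rule eval_ADDc)
lemma ev_mul: "eval a xs x \<Longrightarrow> eval b xs y \<Longrightarrow> eval (mul a b) xs (x * y)"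
  unfolding mul_def by (rule eval_Comp2, assumption, assumption, rule eval_MULc)
lemma ev_sub: "eval a xs x \<Longrightarrow> eval b xs y \<Longrightarrow> eval (sub a b) xs (x - y)"
  unfolding sub_def by (rule eval_Comp2, assumption, assumption, rule eval_SUBc)
lemma ev_suc: "eval a xs x \<Longrightarrow> eval (suc a) xs (Suc x)"
  unfolding suc_def by (rule eval_Comp1, assumption, rule eval_S)
lemma ev_pe: "eval a xs x \<Longrightarrow> eval b xs y \<Longrightarrow> eval (pe a b) xs (prod_encode (x, y))"
  unfolding pe_def prod_encode_def
  by (simp, rule ev_add, rule eval_Comp1, rule ev_add, assumption, assumption, rule eval_TRIc, assumption)
lemma ev_dfst: "eval a xs x \<Longrightarrow> eval (dfst a) xs (fst (prod_decode x))"
  unfolding dfst_def by (rule eval_Comp1, assumption, rule eval_FSTc)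
lemma ev_dsnd: "eval a xs x \<Longrightarrow> eval (dsnd a) xs (snd (prod_decode x))"
  unfolding dsnd_def by (rule eval_Comp1, assumption, rule eval_SNDc)
lemma ev_ifz: assumes "eval c xs z" "eval a xs x" "eval b xs y"
  shows "eval (ifz c a b) xs (if z = 0 then x else y)"
proof -
  have "eval (ifz c a b) xs ((1 - z) * x + (1 - (1 - z)) * y)"
    unfolding ifz_def
    by (rule ev_add[OF ev_mul[OF ev_sub[OF eval_cn assms(1)] assms(2)] ev_mul[OF ev_sub[OF eval_cn ev_sub[OF eval_cn assms(1)]] assms(3)]])
  moreover have "(1 - z) * x + (1 - (1 - z)) * y = (if z = 0 then x else y)"
    by (cases z) auto
  ultimately show ?thesis by simp
qed

fun hd0 :: "nat list \<Rightarrow> nat" where "hd0 [] = 0" | "hd0 (x # _) = x"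

definition "hdc a = dfst (sub a (cn 1))"
definition "tlc a = dsnd (sub a (cn 1))"

lemma pdec0: "prod_decode 0 = (0, 0)"
proof -
  have "prod_encode (0, 0) = 0" by (simp add: prod_encode_def)
  thus ?thesis by (metis prod_encode_inverse)
qed

lemma ev_hdc: assumes "eval a env (list_encode xs)" shows "eval (hdc a) env (hd0 xs)"
proof -
  have "eval (hdc a) env (fst (prod_decode (list_encode xs - 1)))"
    unfolding hdc_def by (rule ev_dfst[OF ev_sub[OF assms eval_cn]])
  moreover have "fst (prod_decode (list_encode xs - 1)) = hd0 xs"
    by (cases xs) (simp_all add: pdec0)
  ultimately show ?thesis by simp
qed

lemma ev_tlc: assumes "eval a env (list_encode xs)" shows "eval (tlc a) env (list_encode (tl xs))"
proof -
  have "eval (tlc a) env (snd (prod_decode (list_encode xs - 1)))"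
    unfolding tlc_def by (rule ev_dsnd[OF ev_sub[OF assms eval_cn]])
  moreover have "snd (prod_decode (list_encode xs - 1)) = list_encode (tl xs)"
    by (cases xs) (simp_all add: pdec0)
  ultimately show ?thesis by simp
qed

definition "DROPc = Prec (Proj 0) (tlc (Proj 0))"
definition "drp a b = Comp DROPc [a, b]"

lemma eval_DROPc: "eval DROPc [k, list_encode xs] (list_encode (drop k xs))"
proof -
  have "eval DROPc (k # [list_encode xs]) ((\<lambda>n. list_encode (drop n xs)) k)"
    unfolding DROPc_def
  proof (rule eval_Prec_all)
    show "eval (Proj 0) [list_encode xs] (list_encode (drop 0 xs))" using eval_P0[of _ "[]"] by simp
    fix n
    have "eval (tlc (Proj 0)) (list_encode (drop n xs) # n # [list_encode xs]) (list_encode (tl (drop n xs)))"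
      by (rule ev_tlc[OF eval_P0])
    thus "eval (tlc (Proj 0)) (list_encode (drop n xs) # n # [list_encode xs]) (list_encode (drop (Suc n) xs))"
      by (simp add: drop_Suc tl_drop)
  qed
  thus ?thesis by simp
qed

lemma ev_drp: "eval a env k \<Longrightarrow> eval b env (list_encode xs) \<Longrightarrow> eval (drp a b) env (list_encode (drop k xs))"
  unfolding drp_def by (rule eval_Comp2, assumption, assumption, rule eval_DROPc)

definition "nthc a b = hdc (drp a b)"
lemma ev_nthc: "eval a env k \<Longrightarrow> eval b env (list_encode xs) \<Longrightarrow> eval (nthc a b) env (hd0 (drop k xs))"
  unfolding nthc_def by (rule ev_hdc, rule ev_drp)

lemma hd0_drop: "k < length xs \<Longrightarrow> hd0 (drop k xs) = xs ! k"
  by (metis Cons_nth_drop_Suc hd0.simps(2))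

lemma list_encode_0: "(list_encode xs = 0) = (xs = [])"
  by (cases xs) auto

definition "LENc = Mn (Comp DROPc [Proj 0, Proj 1])"
definition "lenc a = Comp LENc [a]"

lemma eval_LENc: "eval LENc [list_encode xs] (length xs)"
  unfolding LENc_def
proof (rule eval_Mn)
  have dr: "eval (Comp DROPc [Proj 0, Proj 1]) (m # [list_encode xs]) (list_encode (drop m xs))" for m
    by (rule eval_Comp2, rule eval_P0, rule eval_P1, rule eval_DROPc)
  thus "eval (Comp DROPc [Proj 0, Proj 1]) [length xs, list_encode xs] 0"
    "\<forall>m<length xs. \<exists>r. eval (Comp DROPc [Proj 0, Proj 1]) [m, list_encode xs] r \<and> r \<noteq> 0"
    apply -
    subgoal using dr[of "length xs"] by simp
    using dr by (metis drop_eq_Nil list_encode_0 not_le)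
qed

lemma ev_lenc: "eval a env (list_encode xs) \<Longrightarrow> eval (lenc a) env (length xs)"
  unfolding lenc_def by (rule eval_Comp1, assumption, rule eval_LENc)

definition "TSTEP = suc (pe (nthc (sub (sub (Proj 2) (cn 1)) (Proj 1)) (Proj 3)) (Proj 0))"
definition "TAKEc = Comp (Prec Z TSTEP) [Proj 0, Proj 0, Proj 1]"
definition "takec a b = Comp TAKEc [a, b]"

lemma drop_take_step: "n < k \<Longrightarrow> k \<le> length xs \<Longrightarrow>
  drop (k - Suc n) (take k xs) = xs ! (k - 1 - n) # drop (k - n) (take k xs)"
proof -
  assume a: "n < k" "k \<le> length xs"
  hence "k - Suc n < length (take k xs)" by simp
  hence "drop (k - Suc n) (take k xs) = take k xs ! (k - Suc n) # drop (Suc (k - Suc n)) (take k xs)"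
    by (rule Cons_nth_drop_Suc[symmetric])
  moreover have "Suc (k - Suc n) = k - n" using a by simp
  moreover have "take k xs ! (k - Suc n) = xs ! (k - 1 - n)" using a by simp
  ultimately show ?thesis by simp
qed

lemma eval_TAKEc: assumes "k \<le> length xs" shows "eval TAKEc [k, list_encode xs] (list_encode (take k xs))"
proof -
  let ?h = "\<lambda>i. list_encode (drop (k - i) (take k xs))"
  have "eval (Prec Z TSTEP) (k # [k, list_encode xs]) (?h k)"
  proof (rule eval_Prec_upto[where N = k and h = ?h])
    show "eval Z [k, list_encode xs] (?h 0)" using eval_Z[of "[k, list_encode xs]"] by simp
    fix n assume n: "n < k"
    have "eval TSTEP (?h n # n # [k, list_encode xs])
      (Suc (prod_encode (hd0 (drop (k - 1 - n) xs), ?h n)))"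
      unfolding TSTEP_def
      apply (rule ev_suc, rule ev_pe, rule ev_nthc)
      apply (rule ev_sub, rule ev_sub, rule eval_P2, rule eval_cn)
      apply (rule eval_P1)
      apply (rule eval_P3)
      apply (rule eval_P0)
      done
    moreover have "Suc (prod_encode (hd0 (drop (k - 1 - n) xs), ?h n)) = ?h (Suc n)"
      using drop_take_step[OF n assms] hd0_drop[of "k - 1 - n" xs] n assms by simp
    ultimately show "eval TSTEP (?h n # n # [k, list_encode xs]) (?h (Suc n))" by simp
  qed simp
  thus ?thesis unfolding TAKEc_def
    by (intro eval_Comp3[OF eval_P0 eval_P0 eval_P1]) simp
qed

lemma ev_takec: "eval a env k \<Longrightarrow> eval b env (list_encode xs) \<Longrightarrow> k \<le> length xs \<Longrightarrow>
   eval (takec a b) env (list_encode (take k xs))"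
  unfolding takec_def by (rule eval_Comp2, assumption, assumption, rule eval_TAKEc)

lemma teacher_id: "teacher (\<lambda>\<sigma>. \<sigma>)"
  unfolding teacher_def
  by (intro conjI exI[of _ "Proj 0"] allI impI eval_P0 subset_refl)

lemma PMC_to_T: "PMC_learnable fam \<Longrightarrow> PMC_T_learnable fam"
proof -
  assume "PMC_learnable fam"
  then obtain e p where L: "\<forall>F \<in> range fam. \<forall>f. range f = F \<longrightarrow>
     (\<exists>g. (\<forall>i. eval e [list_encode (seg f i)] (g i)) \<and> good_stream fam F p g)"
    unfolding PMC_learnable_def by blast
  show ?thesis unfolding PMC_T_learnable_def
    by (rule exI[of _ e], rule exI[of _ p], rule exI[of _ "\<lambda>\<sigma>. \<sigma>"], rule conjI[OF teacher_id L])
qed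

lemma PMC_T_to_PMC: assumes "PMC_T_learnable fam" shows "PMC_learnable fam"
proof -
  obtain e p T where T: "teacher T" and L: "\<forall>F \<in> range fam. \<forall>f. range f = F \<longrightarrow>
     (\<exists>g. (\<forall>i. eval e [list_encode (T (seg f i))] (g i)) \<and> good_stream fam F p g)"
    using assms unfolding PMC_T_learnable_def by blast
  obtain t where t: "\<forall>\<sigma>. eval t [list_encode \<sigma>] (list_encode (T \<sigma>))" using T unfolding teacher_def by blast
  show ?thesis unfolding PMC_learnable_def
  proof (intro exI[of _ "Comp e [t]"] exI[of _ p] ballI allI impI)
    fix F and f :: "nat \<Rightarrow> nat" assume F: "F \<in> range fam" and f: "range f = F"
    then obtain g where g: "\<forall>i. eval e [list_encode (T (seg f i))] (g i)" "good_stream fam F p g" using L by blast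
    have "\<forall>i. eval (Comp e [t]) [list_encode (seg f i)] (g i)"
      using g(1) t by (blast intro: eval_Comp1)
    thus "\<exists>g. (\<forall>i. eval (Comp e [t]) [list_encode (seg f i)] (g i)) \<and> good_stream fam F p g"
      using g(2) by blast
  qed
qed

lemma PMC_to_O: assumes "PMC_learnable fam" shows "PMC_O_learnable fam"
proof -
  obtain e p where L: "\<forall>F \<in> range fam. \<forall>f. range f = F \<longrightarrow>
     (\<exists>g. (\<forall>i. eval e [list_encode (seg f i)] (g i)) \<and> good_stream fam F p g)"
    using assms unfolding PMC_learnable_def by blast
  let ?e = "add (Comp e [Proj 0]) (Comp e [Proj 0])"
  show ?thesis unfolding PMC_O_learnable_def
  proof (intro exI[of _ ?e] exI[of _ p] ballI allI impI)
    fix F and f :: "nat \<Rightarrow> nat" assume F: "F \<in> range fam" and f: "range f = F"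
    then obtain g where g: "\<forall>i. eval e [list_encode (seg f i)] (g i)" "good_stream fam F p g" using L by blast
    have "qrun ?e F (seg f i) [] [] (g i)" for i
    proof (rule qrun_hyp)
      have "eval ?e [list_encode (seg f i), enc_log []] (g i + g i)"
        by (rule ev_add; rule eval_Comp1[OF eval_P0 g(1)[rule_format]])
      thus "eval ?e [list_encode (seg f i), enc_log []] (2 * g i)" by (simp add: mult_2)
    qed
    thus "\<exists>L g. L 0 = [] \<and> (\<forall>i. qrun ?e F (seg f i) (L i) (L (Suc i)) (g i)) \<and>
            good_stream fam F p g \<and> (\<forall>i. length (L i) \<le> poly p (mi fam F))"
      using g(2) by (intro exI[of _ "\<lambda>_. []"] exI[of _ g]) auto
  qed
qed

lemma oteacher_id: "oteacher (\<lambda>\<sigma> l. \<sigma>)"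
  unfolding oteacher_def
  by (intro conjI exI[of _ "Proj 0"] allI impI eval_P0 subset_refl)

lemma O_to_TO: "PMC_O_learnable fam \<Longrightarrow> PMC_TO_learnable fam"
proof -
  assume "PMC_O_learnable fam"
  then obtain e p where L: "\<forall>F \<in> range fam. \<forall>f. range f = F \<longrightarrow>
     (\<exists>L g. L 0 = [] \<and> (\<forall>i. qrun e F (seg f i) (L i) (L (Suc i)) (g i)) \<and>
            good_stream fam F p g \<and> (\<forall>i. length (L i) \<le> poly p (mi fam F)))"
    unfolding PMC_O_learnable_def by blast
  show ?thesis unfolding PMC_TO_learnable_def
    by (rule exI[of _ e], rule exI[of _ p], rule exI[of _ "\<lambda>\<sigma> l. \<sigma>"], rule conjI[OF oteacher_id L])
qed

definition fam0 :: "nat \<Rightarrow> nat set" where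
  "fam0 n = (if n = 0 then UNIV else {x. 1 \<le> x \<and> x \<le> n})"

lemma fam0_inj: "fam0 a = fam0 b \<Longrightarrow> a = b"
proof -
  assume h: "fam0 a = fam0 b"
  have k: "(Suc n \<in> fam0 m) = (m = 0 \<or> n < m)" for n m by (auto simp: fam0_def)
  show "a = b"
  proof (rule ccontr)
    assume "a \<noteq> b"
    hence "a < b \<or> b < a" by auto
    thus False
    proof
      assume "a < b" thus False using h k[of a b] k[of a a] k[of b a] k[of b b] by auto
    next
      assume "b < a" thus False using h k[of a b] k[of a a] k[of b a] k[of b b] by auto
    qed
  qed
qed

lemma mi_fam0: "mi fam0 (fam0 n) = n"
  unfolding mi_def using fam0_inj by (intro Least_equality) auto

definition "IFc = Mn (mul (Proj 1) (add (sub (cn 1) (Proj 2)) (sub (Proj 2) (Proj 1))))"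

lemma eval_IF_f: "eval (mul (Proj 1) (add (sub (cn 1) (Proj 2)) (sub (Proj 2) (Proj 1)))) [z, n, x]
   (n * ((1 - x) + (x - n)))"
  by (rule ev_mul, rule eval_P1, rule ev_add, rule ev_sub, rule eval_cn, rule eval_P2, rule ev_sub, rule eval_P2, rule eval_P1)

lemma fam0_cond: "(x \<in> fam0 n) = (n * ((1 - x) + (x - n)) = 0)"
  by (auto simp: fam0_def)

lemma fam0_indexed: "indexed_family fam0"
  unfolding indexed_family_def
proof (intro exI[of _ IFc] allI iffI)
  fix n x assume "x \<in> fam0 n"
  hence "eval IFc [n, x] 0" unfolding IFc_def using eval_IF_f[of 0 n x] fam0_cond
    by (intro eval_Mn) auto
  thus "\<exists>v. eval IFc [n, x] v" by blast
next
  fix n x assume "\<exists>v. eval IFc [n, x] v"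
  then obtain v where "eval IFc [n, x] v" by blast
  hence "eval (mul (Proj 1) (add (sub (cn 1) (Proj 2)) (sub (Proj 2) (Proj 1)))) [v, n, x] 0"
    unfolding IFc_def by (auto elim: evMnE)
  hence "n * ((1 - x) + (x - n)) = 0" using eval_IF_f[of v n x] eval_det by blast
  thus "x \<in> fam0 n" using fam0_cond by simp
qed

definition penc :: "nat \<times> bool \<Rightarrow> nat" where "penc = (\<lambda>(x, b). prod_encode (x, if b then 1 else 0))"

lemma enc_log_penc: "enc_log l = list_encode (map penc l)"
  unfolding enc_log_def penc_def by simp

definition abit :: "qlog \<Rightarrow> nat \<Rightarrow> nat" where
  "abit l j = snd (prod_decode (hd0 (drop j (map penc l))))"

lemma abit_nth: "j < length l \<Longrightarrow> abit l j = (if snd (l ! j) then 1 else 0)"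
  unfolding abit_def using hd0_drop[of j "map penc l"]
  by (simp add: penc_def split: prod.splits)

definition Lout :: "nat \<Rightarrow> nat \<Rightarrow> nat \<Rightarrow> nat" where
  "Lout len a0 al = (if len = 0 then 1 else if 1 - a0 = 0 then 0
      else if (1 - al) * (len - 1) = 0 then 2 * len + 1 else 2 * (len - 2))"

definition "LRN = ifz (lenc (Proj 1)) (cn 1)
   (ifz (sub (cn 1) (dsnd (nthc (cn 0) (Proj 1)))) (cn 0)
     (ifz (mul (sub (cn 1) (dsnd (nthc (sub (lenc (Proj 1)) (cn 1)) (Proj 1)))) (sub (lenc (Proj 1)) (cn 1)))
          (add (mul (cn 2) (lenc (Proj 1))) (cn 1))
          (mul (cn 2) (sub (lenc (Proj 1)) (cn 2)))))"

lemma eval_LRN: "eval LRN [s, enc_log l] (Lout (length l) (abit l 0) (abit l (length l - 1)))"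
proof -
  let ?env = "[s, enc_log l]"
  have c: "eval (Proj 1) ?env (list_encode (map penc l))" using eval_P1[of s "enc_log l" "[]"]
    by (simp add: enc_log_penc)
  have len: "eval (lenc (Proj 1)) ?env (length l)" using ev_lenc[OF c] by simp
  have a0: "eval (dsnd (nthc (cn 0) (Proj 1))) ?env (abit l 0)"
    unfolding abit_def by (rule ev_dsnd, rule ev_nthc[OF eval_cn c])
  have al: "eval (dsnd (nthc (sub (lenc (Proj 1)) (cn 1)) (Proj 1))) ?env (abit l (length l - 1))"
    unfolding abit_def by (rule ev_dsnd, rule ev_nthc[OF ev_sub[OF len eval_cn] c])
  show ?thesis unfolding LRN_def Lout_def
    by (rule ev_ifz[OF len eval_cn ev_ifz[OF ev_sub[OF eval_cn a0] eval_cn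
          ev_ifz[OF ev_mul[OF ev_sub[OF eval_cn al] ev_sub[OF len eval_cn]]
             ev_add[OF ev_mul[OF eval_cn len] eval_cn] ev_mul[OF eval_cn ev_sub[OF len eval_cn]]]]])
qed

definition lg :: "nat set \<Rightarrow> nat \<Rightarrow> qlog" where "lg F k = map (\<lambda>x. (x, x \<in> F)) [0..<k]"

lemma lg_Suc: "lg F (Suc k) = lg F k @ [(k, k \<in> F)]" unfolding lg_def by simp
lemma lg_len: "length (lg F k) = k" unfolding lg_def by simp
lemma abit_lg: "j < k \<Longrightarrow> abit (lg F k) j = (if j \<in> F then 1 else 0)"
  using abit_nth[of j "lg F k"] by (simp add: lg_def lg_len)

lemma run_UNIV: "qrun LRN UNIV \<sigma> [] (lg UNIV 1) 0" "qrun LRN UNIV \<sigma> (lg UNIV 1) (lg UNIV 1) 0"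
proof -
  have h: "eval LRN [list_encode \<sigma>, enc_log (lg UNIV 1)] (2 * 0)"
    using eval_LRN[of "list_encode \<sigma>" "lg UNIV 1"] by (simp add: lg_len abit_lg Lout_def)
  show "qrun LRN UNIV \<sigma> (lg UNIV 1) (lg UNIV 1) 0" by (rule qrun_hyp[OF h])
  have q: "eval LRN [list_encode \<sigma>, enc_log []] (2 * 0 + 1)"
    using eval_LRN[of "list_encode \<sigma>" "[]"] by (simp add: Lout_def)
  show "qrun LRN UNIV \<sigma> [] (lg UNIV 1) 0"
    using qrun_query[OF q, of UNIV] qrun_hyp[OF h] by (simp add: lg_def)
qed

lemma run_fin: assumes n: "n \<ge> 1"
  shows "d \<le> n + 2 \<Longrightarrow> qrun LRN (fam0 n) \<sigma> (lg (fam0 n) (n + 2 - d)) (lg (fam0 n) (n + 2)) n"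
proof (induction d)
  case 0
  have "eval LRN [list_encode \<sigma>, enc_log (lg (fam0 n) (n + 2))] (2 * n)"
    using eval_LRN[of "list_encode \<sigma>" "lg (fam0 n) (n + 2)"] n
    by (simp add: lg_len abit_lg Lout_def fam0_def)
  thus ?case by (simp add: qrun_hyp)
next
  case (Suc d)
  let ?k = "n + 2 - Suc d"
  have k: "?k < n + 2" "Suc ?k = n + 2 - d" using Suc.prems by auto
  have "eval LRN [list_encode \<sigma>, enc_log (lg (fam0 n) ?k)] (2 * ?k + 1)"
  proof -
    have "Lout ?k (abit (lg (fam0 n) ?k) 0) (abit (lg (fam0 n) ?k) (?k - 1)) = 2 * ?k + 1"
    proof (cases "?k = 0")
      case True thus ?thesis by (simp add: Lout_def)
    next
      case False
      have a0: "abit (lg (fam0 n) ?k) 0 = 0" using False n by (simp add: abit_lg fam0_def)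
      have al: "(1 - abit (lg (fam0 n) ?k) (?k - 1)) * (?k - 1) = 0"
        using False n k by (cases "?k = 1") (auto simp: abit_lg fam0_def)
      show ?thesis using False a0 al by (simp add: Lout_def)
    qed
    thus ?thesis using eval_LRN[of "list_encode \<sigma>" "lg (fam0 n) ?k"] by (simp add: lg_len)
  qed
  moreover have "qrun LRN (fam0 n) \<sigma> (lg (fam0 n) ?k @ [(?k, ?k \<in> fam0 n)]) (lg (fam0 n) (n + 2)) n"
    using Suc k by (simp add: lg_Suc[symmetric])
  ultimately show ?case by (rule qrun_query)
qed

lemma fam0_O: "PMC_O_learnable fam0"
  unfolding PMC_O_learnable_def
proof (intro exI[of _ LRN] exI[of _ "[:2, 1:]"] ballI allI impI)
  fix F and f :: "nat \<Rightarrow> nat" assume "F \<in> range fam0" "range f = F"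
  then obtain n where F: "F = fam0 n" by blast
  define Lf where "Lf = (if n = 0 then lg UNIV 1 else lg (fam0 n) (n + 2))"
  define L where "L = (\<lambda>i::nat. if i = 0 then [] else Lf)"
  have r0: "qrun LRN F \<sigma> [] Lf n" and r1: "qrun LRN F \<sigma> Lf Lf n" for \<sigma>
  proof -
    show "qrun LRN F \<sigma> [] Lf n"
    proof (cases "n = 0")
      case True thus ?thesis using run_UNIV F by (simp add: Lf_def fam0_def)
    next
      case False
      hence "n \<ge> 1" by simp
      from run_fin[OF this, of "n + 2" \<sigma>] show ?thesis using F False by (simp add: Lf_def lg_def)
    qed
    show "qrun LRN F \<sigma> Lf Lf n"
    proof (cases "n = 0")
      case True thus ?thesis using run_UNIV F by (simp add: Lf_def fam0_def)
    next
      case False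
      hence "n \<ge> 1" by simp
      from run_fin[OF this, of 0 \<sigma>] show ?thesis using F False by (simp add: Lf_def)
    qed
  qed
  have q: "\<forall>i. qrun LRN F (seg f i) (L i) (L (Suc i)) n"
    using r0 r1 by (simp add: L_def)
  have len: "\<forall>i. length (L i) \<le> poly [:2, 1:] (mi fam0 F)"
    by (simp add: L_def Lf_def lg_len mi_fam0 F)
  have gs: "good_stream fam0 F [:2, 1:] (\<lambda>_. n)"
    unfolding good_stream_def using F by auto
  show "\<exists>L g. L 0 = [] \<and> (\<forall>i. qrun LRN F (seg f i) (L i) (L (Suc i)) (g i)) \<and>
            good_stream fam0 F [:2, 1:] g \<and> (\<forall>i. length (L i) \<le> poly [:2, 1:] (mi fam0 F))"
    using q len gs by (intro exI[of _ L] exI[of _ "\<lambda>_. n"]) (simp add: L_def)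
qed

lemma ev_const: assumes "finite {i. g i \<noteq> g (Suc i)}"
  shows "\<exists>N. \<forall>i\<ge>N. g i = (g N :: nat)"
proof -
  let ?S = "{i. g i \<noteq> g (Suc i)}"
  define N where "N = (if ?S = {} then 0 else Suc (Max ?S))"
  have nS: "i \<ge> N \<Longrightarrow> i \<notin> ?S" for i
  proof
    assume "i \<ge> N" "i \<in> ?S"
    hence "i \<le> Max ?S" using assms by auto
    thus False using \<open>i \<ge> N\<close> \<open>i \<in> ?S\<close> by (auto simp: N_def split: if_splits)
  qed
  have "i \<ge> N \<Longrightarrow> g i = g N" for i
  proof (induction i rule: dec_induct)
    case base thus ?case by simp
  next
    case (step m)
    have "g (Suc m) = g m" using nS[of m] step(1) by auto
    thus ?case using step(3) by (rule trans)
  qed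
  thus ?thesis by blast
qed

lemma change_exists: "a < b \<Longrightarrow> g a \<noteq> (g b :: nat) \<Longrightarrow> \<exists>i. a \<le> i \<and> i < b \<and> g i \<noteq> g (Suc i)"
proof (induction b)
  case 0 thus ?case by simp
next
  case (Suc b)
  show ?case
  proof (cases "g b = g (Suc b)")
    case True
    hence "a < b" using Suc.prems by (metis less_SucE)
    thus ?thesis using Suc True by (metis less_SucI)
  next
    case False
    thus ?thesis using Suc.prems by (intro exI[of _ b]) auto
  qed
qed

lemma seg_prefix: assumes "prefix \<sigma> (seg f i)" shows "seg f (length \<sigma>) = \<sigma>"
proof -
  have "length \<sigma> \<le> i" using prefix_length_le[OF assms] by (simp add: seg_def)
  have "seg f (length \<sigma>) = take (length \<sigma>) (seg f i)"
    unfolding seg_def using \<open>length \<sigma> \<le> i\<close> by (simp add: take_map min_def)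
  thus ?thesis using assms by (metis append_eq_conv_conj prefix_def)
qed

lemma seg_app: "seg (\<lambda>n. if n < length \<sigma> then \<sigma> ! n else h n) (length \<sigma> + d) = \<sigma> @ map h [length \<sigma>..<length \<sigma> + d]"
proof -
  have "[0..<length \<sigma> + d] = [0..<length \<sigma>] @ [length \<sigma>..<length \<sigma> + d]"
    by (rule upt_add_eq_append) simp
  moreover have "map (\<lambda>n. if n < length \<sigma> then \<sigma> ! n else h n) [0..<length \<sigma>] = map (\<lambda>i. \<sigma> ! i) [0..<length \<sigma>]"
    by (rule map_cong) simp_all
  moreover have "map (\<lambda>i. \<sigma> ! i) [0..<length \<sigma>] = \<sigma>" by (rule map_nth)
  moreover have "map (\<lambda>n. if n < length \<sigma> then \<sigma> ! n else h n) [length \<sigma>..<length \<sigma> + d]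
        = map h [length \<sigma>..<length \<sigma> + d]"
    by (rule map_cong) simp_all
  ultimately show ?thesis unfolding seg_def by (simp only: map_append)
qed

lemma set_seg: "set (seg f i) \<subseteq> range f" unfolding seg_def by auto

context
  fixes e p
  assumes L: "\<forall>F \<in> range fam0. \<forall>f. range f = F \<longrightarrow>
     (\<exists>g. (\<forall>i. eval e [list_encode (seg f i)] (g i)) \<and> good_stream fam0 F p g)"
begin

lemma conv: assumes k: "k \<ge> 1" and s: "set \<sigma> \<subseteq> fam0 k"
  shows "\<exists>\<tau>. prefix \<sigma> \<tau> \<and> set \<tau> \<subseteq> fam0 k \<and> eval e [list_encode \<tau>] k"
proof -
  define h where "h = (\<lambda>n. (n - length \<sigma>) mod k + 1)"
  define f where "f = (\<lambda>n. if n < length \<sigma> then \<sigma> ! n else h n)"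
  have rf: "range f = fam0 k"
  proof
    show "range f \<subseteq> fam0 k"
    proof
      fix y assume "y \<in> range f"
      then obtain n where y: "y = f n" by blast
      show "y \<in> fam0 k"
      proof (cases "n < length \<sigma>")
        case True thus ?thesis using s y by (auto simp: f_def)
      next
        case False
        have "(n - length \<sigma>) mod k < k" using k by simp
        thus ?thesis using False y k by (simp add: f_def h_def fam0_def Suc_le_eq)
      qed
    qed
    show "fam0 k \<subseteq> range f"
    proof
      fix y assume "y \<in> fam0 k"
      hence y: "1 \<le> y" "y \<le> k" using k by (auto simp: fam0_def)
      have nl: "\<not> (length \<sigma> + (y - 1) < length \<sigma>)" by simp
      have "f (length \<sigma> + (y - 1)) = (y - 1) mod k + 1" unfolding f_def h_def using nl by (simp only: if_False) simp
      also have "\<dots> = y" using y by simp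
      finally have "f (length \<sigma> + (y - 1)) = y" .
      thus "y \<in> range f" by (metis rangeI)
    qed
  qed
  have fr: "fam0 k \<in> range fam0" by simp
  from L[rule_format, OF fr rf] obtain g where g: "\<forall>i. eval e [list_encode (seg f i)] (g i)" "good_stream fam0 (fam0 k) p g"
    by (elim exE conjE)
  have gs1: "finite {i. g i \<noteq> g (Suc i)}"
    using g(2) unfolding good_stream_def by (elim conjE)
  have gs3: "\<And>v. infinite {i. g i = v} \<Longrightarrow> fam0 v = fam0 k"
    using g(2) unfolding good_stream_def by (elim conjE) blast
  obtain N where N: "\<forall>i\<ge>N. g i = g N" using ev_const[OF gs1] by (elim exE)
  have "{N..} \<subseteq> {i. g i = g N}" using N by blast
  hence "infinite {i. g i = g N}" by (rule infinite_super) (rule infinite_Ici)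
  hence "fam0 (g N) = fam0 k" by (rule gs3)
  hence gN: "g N = k" by (rule fam0_inj)
  let ?\<tau> = "seg f (length \<sigma> + N)"
  have "?\<tau> = \<sigma> @ map h [length \<sigma>..<length \<sigma> + N]" unfolding f_def by (rule seg_app)
  hence "prefix \<sigma> ?\<tau>" by simp
  moreover have "set ?\<tau> \<subseteq> fam0 k" using set_seg rf by blast
  moreover have "eval e [list_encode ?\<tau>] k"
  proof -
    have "N \<le> length \<sigma> + N" by simp
    hence "g (length \<sigma> + N) = g N" using N by blast
    hence "g (length \<sigma> + N) = k" using gN by simp
    thus ?thesis using g(1) by metis
  qed
  ultimately show ?thesis by blast
qed

definition nxt :: "nat list \<Rightarrow> nat \<Rightarrow> nat list" where
  "nxt \<sigma> k = (SOME \<tau>. prefix \<sigma> \<tau> \<and> set \<tau> \<subseteq> fam0 k \<and> eval e [list_encode \<tau>] k)"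

primrec ch :: "nat \<Rightarrow> nat list" where
  "ch 0 = nxt [] 1" | "ch (Suc j) = nxt (ch j) (j + 2)"

lemma nxt_prop: "k \<ge> 1 \<Longrightarrow> set \<sigma> \<subseteq> fam0 k \<Longrightarrow>
   prefix \<sigma> (nxt \<sigma> k) \<and> set (nxt \<sigma> k) \<subseteq> fam0 k \<and> eval e [list_encode (nxt \<sigma> k)] k"
  unfolding nxt_def by (rule someI_ex, rule conv)

lemma fam0_mono: "1 \<le> a \<Longrightarrow> a \<le> b \<Longrightarrow> fam0 a \<subseteq> fam0 b" by (auto simp: fam0_def)

lemma ch_prop: "set (ch j) \<subseteq> fam0 (j + 1) \<and> eval e [list_encode (ch j)] (j + 1) \<and> prefix (ch j) (ch (Suc j))"
proof (induction j)
  case 0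
  have a: "set (ch 0) \<subseteq> fam0 1 \<and> eval e [list_encode (ch 0)] 1" using nxt_prop[of 1 "[]"] by simp
  have "set (ch 0) \<subseteq> fam0 2" using a fam0_mono[of 1 2] by auto
  hence "prefix (ch 0) (ch 1)" using nxt_prop[of 2 "ch 0"] by (simp add: numeral_2_eq_2)
  thus ?case using a by simp
next
  case (Suc j)
  have a: "set (ch (Suc j)) \<subseteq> fam0 (j + 2) \<and> eval e [list_encode (ch (Suc j))] (j + 2)"
    using nxt_prop[of "j + 2" "ch j"] Suc fam0_mono[of "j + 1" "j + 2"] by auto
  have "set (ch (Suc j)) \<subseteq> fam0 (j + 3)" using a fam0_mono[of "j + 2" "j + 3"] by auto
  hence "prefix (ch (Suc j)) (ch (Suc (Suc j)))" using nxt_prop[of "j + 3" "ch (Suc j)"]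
    by (simp add: numeral_eq_Suc)
  thus ?case using a by (simp add: numeral_eq_Suc)
qed

lemma ch_mono: "j \<le> j' \<Longrightarrow> prefix (ch j) (ch j')"
proof (induction j' rule: dec_induct)
  case base thus ?case by simp
next
  case (step m) thus ?case using ch_prop[of m] prefix_order.order_trans by blast
qed

lemma not_learnable: False
proof -
  define c where "c = poly p 0"
  define \<sigma> where "\<sigma> = ch (Suc c)"
  define f where "f = (\<lambda>n. if n < length \<sigma> then \<sigma> ! n else n - length \<sigma>)"
  have rf: "range f = fam0 0"
  proof -
    have "f (length \<sigma> + y) = y" for y by (simp add: f_def)
    hence "y \<in> range f" for y by (metis rangeI)
    thus ?thesis by (auto simp: fam0_def)
  qed
  have fr: "fam0 0 \<in> range fam0" by simp
  obtain g where g: "\<forall>i. eval e [list_encode (seg f i)] (g i)" "good_stream fam0 (fam0 0) p g"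
    using L[rule_format, OF fr rf] by blast
  define a where "a = (\<lambda>j. length (ch j))"
  have ga: "g (a j) = j + 1" if "j \<le> Suc c" for j
  proof -
    have "prefix (ch j) \<sigma>" using ch_mono[OF that] by (simp add: \<sigma>_def)
    then obtain zs where zs: "\<sigma> = ch j @ zs" by (auto simp: prefix_def)
    have "seg f (length \<sigma>) = \<sigma>" unfolding f_def using seg_app[of \<sigma> _ 0] by simp
    hence "prefix (ch j) (seg f (length \<sigma>))" using zs by simp
    hence "seg f (a j) = ch j" unfolding a_def by (rule seg_prefix)
    hence "eval e [list_encode (ch j)] (g (a j))" using g(1) by metis
    thus ?thesis using ch_prop[of j] eval_det by blast
  qed
  have amono: "a j < a (Suc j)" if "j \<le> c" for j
  proof -
    have "a j \<le> a (Suc j)" unfolding a_def using ch_prop[of j] prefix_length_le by blast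
    moreover have "a j \<noteq> a (Suc j)" using ga[of j] ga[of "Suc j"] that by auto
    ultimately show ?thesis by simp
  qed
  have amono2: "j < j' \<Longrightarrow> j' \<le> Suc c \<Longrightarrow> a (Suc j) \<le> a j'" for j j'
  proof (induction j' rule: less_induct)
    case (less j')
    show ?case
    proof (cases "j' = Suc j")
      case True thus ?thesis by simp
    next
      case False
      define m where "m = j' - 1"
      have m: "j' = Suc m" "j < m" using False less.prems by (auto simp: m_def)
      have "a (Suc j) \<le> a m" using less.IH[of m] m less.prems by simp
      also have "a m \<le> a j'" using amono[of m] m less.prems by simp
      finally show ?thesis .
    qed
  qed
  define S where "S = {i. g i \<noteq> g (Suc i)}"
  have "mi fam0 (fam0 0) = 0" by (rule mi_fam0)
  hence fS: "finite S" and cS: "card S \<le> c" using g(2)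
    unfolding good_stream_def S_def c_def by simp_all
  define sel where "sel = (\<lambda>j. SOME i. a j \<le> i \<and> i < a (Suc j) \<and> g i \<noteq> g (Suc i))"
  have sel: "a j \<le> sel j \<and> sel j < a (Suc j) \<and> g (sel j) \<noteq> g (Suc (sel j))" if "j \<le> c" for j
  proof -
    have "g (a j) \<noteq> g (a (Suc j))" using ga[of j] ga[of "Suc j"] that by simp
    from change_exists[OF amono[OF that] this] show ?thesis unfolding sel_def by (rule someI_ex)
  qed
  have "inj_on sel {0..c}"
  proof (rule inj_onI)
    fix j j' assume j: "j \<in> {0..c}" "j' \<in> {0..c}" "sel j = sel j'"
    show "j = j'"
    proof (rule ccontr)
      assume "j \<noteq> j'"
      hence "j < j' \<or> j' < j" by auto
      thus False
      proof
        assume "j < j'"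
        moreover have "j' \<le> Suc c" using j by simp
        ultimately have "a (Suc j) \<le> a j'" by (rule amono2)
        moreover have "sel j < a (Suc j)" using sel[of j] j by simp
        ultimately have "sel j < a j'" by simp
        thus False using sel[of j'] j by auto
      next
        assume "j' < j"
        moreover have "j \<le> Suc c" using j by simp
        ultimately have "a (Suc j') \<le> a j" by (rule amono2)
        moreover have "sel j' < a (Suc j')" using sel[of j'] j by simp
        ultimately have "sel j' < a j" by simp
        thus False using sel[of j] j by auto
      qed
    qed
  qed
  hence "card (sel ` {0..c}) = Suc c" by (simp add: card_image)
  moreover have "sel ` {0..c} \<subseteq> S" using sel by (auto simp: S_def)
  ultimately have "Suc c \<le> card S" using card_mono[OF fS] by metis
  thus False using cS by simp
qed

end

lemma fam0_not_PMC: "\<not> PMC_learnable fam0"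
  unfolding PMC_learnable_def using not_learnable by blast

definition "MOD2c = Comp (Prec Z (sub (cn 1) (Proj 0))) [Proj 0]"
definition "md2 a = Comp MOD2c [a]"

lemma eval_MOD2c: "eval MOD2c [a] (a mod 2)"
proof -
  have "eval (Prec Z (sub (cn 1) (Proj 0))) (n # []) ((\<lambda>n. n mod 2) n)" for n
  proof (rule eval_Prec_all)
    show "eval Z [] (0 mod 2)" using eval_Z by simp
    fix n
    have "eval (sub (cn 1) (Proj 0)) (n mod 2 # n # []) (1 - n mod 2)"
      by (rule ev_sub[OF eval_cn eval_P0])
    moreover have "1 - n mod 2 = Suc n mod 2" by (cases "even n") (simp_all add: mod_Suc)
    ultimately show "eval (sub (cn 1) (Proj 0)) (n mod 2 # n # []) (Suc n mod 2)" by simp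
  qed
  from this[of a] show ?thesis unfolding MOD2c_def by (rule eval_Comp1[OF eval_P0[of a "[]"]])
qed

lemma ev_md2: "eval a env x \<Longrightarrow> eval (md2 a) env (x mod 2)"
  unfolding md2_def by (rule eval_Comp1, assumption, rule eval_MOD2c)

lemma qrun_facts: "qrun e A D m0 m' h \<Longrightarrow> prefix m0 m' \<and>
   (\<forall>q. length m0 \<le> q \<and> q < length m' \<longrightarrow> (\<exists>x. eval e [list_encode D, enc_log (take q m')] (2 * x + 1))) \<and>
   eval e [list_encode D, enc_log m'] (2 * h)"
proof (induction rule: qrun.induct)
  case (qrun_hyp e \<sigma> l h A) thus ?case by auto
next
  case (qrun_query e \<sigma> l x A l' h)
  have pre: "prefix l l'" using qrun_query.IH prefix_order.order_trans[of l "l @ [(x, x \<in> A)]" l'] by simp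
  have q: "\<exists>x. eval e [list_encode \<sigma>, enc_log (take q l')] (2 * x + 1)" if "length l \<le> q" "q < length l'" for q
  proof (cases "q = length l")
    case True
    hence "take q l' = l" using pre by (metis append_eq_conv_conj prefix_def)
    thus ?thesis using qrun_query.hyps(1) by auto
  next
    case False thus ?thesis using qrun_query.IH that by simp
  qed
  show ?case using pre q qrun_query.IH by blast
qed

locale replay =
  fixes e t :: recf and T :: "nat list \<Rightarrow> qlog \<Rightarrow> nat list"
  assumes tspec: "\<And>\<sigma> l. eval t [list_encode \<sigma>, enc_log l] (list_encode (T \<sigma> l))"
begin

definition "KK = dfst (Proj 0)"
definition "VV = Comp e [Comp t [takec (Proj 3) (Proj 5), takec (Proj 4) (Proj 6)], takec KK (Proj 6)]"
definition "BB = ifz (md2 VV) (pe KK (cn 1)) (pe (suc KK) (cn 0))"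
definition "STEPL = Comp (Prec (Proj 0) BB) [sub (cn 1) (dsnd (Proj 0)), Proj 0, Proj 2, Proj 3, Proj 4, Proj 5]"
definition "LOOPc = Prec (pe (Proj 1) (cn 0)) STEPL"
definition "OSTEP = dfst (Comp LOOPc [suc (lenc (Proj 3)), Proj 1, Proj 0, Proj 2, Proj 3])"
definition "ROUNDS = Prec (cn 0) OSTEP"
definition "RSTART = Comp ROUNDS [lenc (Proj 0), Proj 0, Proj 1]"
definition "E' = Comp e [Comp t [Proj 0, takec RSTART (Proj 1)], Proj 1]"

lemma enc_take: "list_encode (take k (map penc l)) = enc_log (take k l)"
  by (simp add: enc_log_penc take_map)

definition stv :: "nat \<Rightarrow> nat \<Rightarrow> nat \<Rightarrow> nat" where
  "stv a b n = (if n \<le> b - a then prod_encode (a + n, 0) else prod_encode (b, 1))"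

lemma loop:
  assumes run: "qrun e A (T (take j \<sigma>) m0) m0 m' h" and pre: "prefix m' l" and j: "j \<le> length \<sigma>"
  shows "eval LOOPc [n, j, length m0, list_encode \<sigma>, enc_log l] (stv (length m0) (length m') n)"
proof -
  obtain p1: "prefix m0 m'" and p2: "\<And>q. length m0 \<le> q \<Longrightarrow> q < length m' \<Longrightarrow>
      \<exists>x. eval e [list_encode (T (take j \<sigma>) m0), enc_log (take q m')] (2 * x + 1)"
    and p3: "eval e [list_encode (T (take j \<sigma>) m0), enc_log m'] (2 * h)"
    using qrun_facts[OF run] by blast
  let ?a = "length m0" and ?b = "length m'"
  have ab: "?a \<le> ?b" using prefix_length_le[OF p1] .
  have bl: "?b \<le> length l" using prefix_length_le[OF pre] .
  have tm0: "take ?a l = m0" using p1 pre by (metis prefix_order.order_trans append_eq_conv_conj prefix_def)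
  have tm': "take q l = take q m'" if "q \<le> ?b" for q
    using pre that by (metis append_eq_conv_conj prefix_def take_take min.absorb1)
  let ?xs = "[j, ?a, list_encode \<sigma>, enc_log l]"
  show ?thesis unfolding LOOPc_def
  proof (rule eval_Prec_all[where h = "stv ?a ?b"])
    show "eval (pe (Proj 1) (cn 0)) ?xs (stv ?a ?b 0)"
    proof -
      have "stv ?a ?b 0 = prod_encode (?a, 0)" by (simp add: stv_def)
      thus ?thesis by (intro ev_eq[OF ev_pe[OF eval_P1 eval_cn]]) simp
    qed
    fix n
    let ?E = "stv ?a ?b n # n # ?xs"
    have c: "eval (Proj 5) ?E (list_encode (map penc l))" 
      using eval_Proj[of 5 ?E] by (simp add: enc_log_penc numeral_eq_Suc)
    have genBB: "eval BB (st # 0 # st # ?xs) (if v mod 2 = 0 then prod_encode (k, 1) else prod_encode (Suc k, 0))"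
      if st: "fst (prod_decode st) = k" and k: "k \<le> ?b" and v: "eval e [list_encode (T (take j \<sigma>) m0), enc_log (take k m')] v"
      for st k v
    proof -
      let ?E7 = "st # 0 # st # ?xs"
      have K: "eval KK ?E7 k" unfolding KK_def using ev_dfst[OF eval_P0[of st "0 # st # ?xs"]] st by simp
      have c7: "eval (Proj 6) ?E7 (list_encode (map penc l))"
        using eval_Proj[of 6 ?E7] by (simp add: enc_log_penc numeral_eq_Suc)
      have s7: "eval (Proj 5) ?E7 (list_encode \<sigma>)"
        using eval_Proj[of 5 ?E7] by (simp add: numeral_eq_Suc)
      have j7: "eval (Proj 3) ?E7 j" using eval_Proj[of 3 ?E7] by (simp add: numeral_eq_Suc)
      have a7: "eval (Proj 4) ?E7 ?a" using eval_Proj[of 4 ?E7] by (simp add: numeral_eq_Suc)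
      have D: "eval (Comp t [takec (Proj 3) (Proj 5), takec (Proj 4) (Proj 6)]) ?E7 (list_encode (T (take j \<sigma>) m0))"
      proof (rule eval_Comp2)
        show "eval (takec (Proj 3) (Proj 5)) ?E7 (list_encode (take j \<sigma>))" by (rule ev_takec[OF j7 s7 j])
        show "eval (takec (Proj 4) (Proj 6)) ?E7 (enc_log m0)"
          using ev_takec[OF a7 c7] ab bl tm0 by (simp add: enc_take)
        show "eval t [list_encode (take j \<sigma>), enc_log m0] (list_encode (T (take j \<sigma>) m0))" by (rule tspec)
      qed
      have tk: "eval (takec KK (Proj 6)) ?E7 (enc_log (take k m'))"
        using ev_takec[OF K c7] k bl tm'[OF k] by (simp add: enc_take)
      have V: "eval VV ?E7 v" unfolding VV_def by (rule eval_Comp2[OF D tk v])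
      show ?thesis unfolding BB_def
        by (rule ev_ifz[OF ev_md2[OF V] ev_pe[OF K eval_cn] ev_pe[OF ev_suc[OF K] eval_cn]])
    qed
    have args: "eval (Proj 0) ?E (stv ?a ?b n)" "eval (Proj 2) ?E j" "eval (Proj 3) ?E ?a"
       "eval (Proj 4) ?E (list_encode \<sigma>)" "eval (Proj 5) ?E (enc_log l)"
      using eval_P0[of _ "n # ?xs"] eval_Proj[of 2 ?E] eval_Proj[of 3 ?E] eval_Proj[of 4 ?E] eval_Proj[of 5 ?E]
      by (simp_all add: numeral_eq_Suc)
    have fl: "eval (sub (cn 1) (dsnd (Proj 0))) ?E (1 - snd (prod_decode (stv ?a ?b n)))"
      by (rule ev_sub[OF eval_cn ev_dsnd[OF eval_P0]])
    show "eval STEPL ?E (stv ?a ?b (Suc n))"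
    proof (cases "n \<le> ?b - ?a")
      case True
      hence sv: "stv ?a ?b n = prod_encode (?a + n, 0)" by (simp add: stv_def)
      have flv: "1 - snd (prod_decode (stv ?a ?b n)) = 1" using sv by simp
      have P0: "eval (Prec (Proj 0) BB) (Suc 0 # [stv ?a ?b n, j, ?a, list_encode \<sigma>, enc_log l]) (stv ?a ?b (Suc n))"
      proof (rule eval_PrecS)
        show "eval (Prec (Proj 0) BB) [0, stv ?a ?b n, j, ?a, list_encode \<sigma>, enc_log l] (stv ?a ?b n)"
          by (rule eval_Prec0, rule eval_P0)
        have st: "fst (prod_decode (stv ?a ?b n)) = ?a + n" using sv by simp
        have k: "?a + n \<le> ?b" using True ab by simp
        show "eval BB [stv ?a ?b n, 0, stv ?a ?b n, j, ?a, list_encode \<sigma>, enc_log l] (stv ?a ?b (Suc n))"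
        proof (cases "?a + n < ?b")
          case True
          then obtain x where x: "eval e [list_encode (T (take j \<sigma>) m0), enc_log (take (?a + n) m')] (2 * x + 1)"
            using p2[of "?a + n"] by auto
          have "stv ?a ?b (Suc n) = prod_encode (Suc (?a + n), 0)" using True by (simp add: stv_def)
          thus ?thesis using genBB[OF st k x] by simp
        next
          case False
          hence eq: "?a + n = ?b" using k by simp
          hence "take (?a + n) m' = m'" by simp
          hence x: "eval e [list_encode (T (take j \<sigma>) m0), enc_log (take (?a + n) m')] (2 * h)" using p3 by simp
          have "stv ?a ?b (Suc n) = prod_encode (?a + n, 1)" using eq by (simp add: stv_def)
          thus ?thesis using genBB[OF st k x] by simp
        qed
      qed
      hence P: "eval (Prec (Proj 0) BB) (1 # [stv ?a ?b n, j, ?a, list_encode \<sigma>, enc_log l]) (stv ?a ?b (Suc n))"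
        by simp
      show ?thesis unfolding STEPL_def
        by (rule eval_Comp[where ys = "[1, stv ?a ?b n, j, ?a, list_encode \<sigma>, enc_log l]"], simp_all only: list_all2_Cons list_all2_Nil fl[unfolded flv] args P simp_thms)
    next
      case False
      hence sv: "stv ?a ?b n = prod_encode (?b, 1)" by (simp add: stv_def)
      have sv2: "stv ?a ?b (Suc n) = stv ?a ?b n" using False by (simp add: stv_def)
      have flv: "1 - snd (prod_decode (stv ?a ?b n)) = 0" using sv by simp
      have P: "eval (Prec (Proj 0) BB) (0 # [stv ?a ?b n, j, ?a, list_encode \<sigma>, enc_log l]) (stv ?a ?b (Suc n))"
        unfolding sv2 by (rule eval_Prec0, rule eval_P0)
      show ?thesis unfolding STEPL_def
        by (rule eval_Comp[where ys = "[0, stv ?a ?b n, j, ?a, list_encode \<sigma>, enc_log l]"], simp_all only: list_all2_Cons list_all2_Nil fl[unfolded flv] args P simp_thms)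
    qed
  qed
qed

end

context replay
begin

lemma take_seg: "j \<le> i \<Longrightarrow> take j (seg f i) = seg f j"
  unfolding seg_def by (simp add: take_map min_def)

lemma len_seg: "length (seg f i) = i" unfolding seg_def by simp

context
  fixes F :: "nat set" and f :: "nat \<Rightarrow> nat" and L :: "nat \<Rightarrow> qlog" and g :: "nat \<Rightarrow> nat"
  assumes L0: "L 0 = []"
    and run: "\<And>j. qrun e F (T (seg f j) (L j)) (L j) (L (Suc j)) (g j)"
begin

lemma Lmono: "j \<le> j' \<Longrightarrow> prefix (L j) (L j')"
proof (induction j' rule: dec_induct)
  case base thus ?case by simp
next
  case (step m)
  have "prefix (L m) (L (Suc m))" using qrun_facts[OF run[of m]] by (elim conjE)
  with step(3) show ?case by (rule prefix_order.order_trans)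
qed

lemma rounds: assumes pl: "prefix (L i) l"
  shows "j \<le> i \<Longrightarrow> eval ROUNDS (j # [list_encode (seg f i), enc_log l]) (length (L j))"
  unfolding ROUNDS_def
proof (rule eval_Prec_upto[where N = i and h = "\<lambda>j. length (L j)"])
  show "eval (cn 0) [list_encode (seg f i), enc_log l] (length (L 0))" using L0 eval_cn[of 0] by simp
  fix n assume n: "n < i"
  let ?E = "length (L n) # n # [list_encode (seg f i), enc_log l]"
  have c: "eval (Proj 3) ?E (list_encode (map penc l))"
    using eval_Proj[of 3 ?E] by (simp add: enc_log_penc numeral_eq_Suc)
  have M: "eval (suc (lenc (Proj 3))) ?E (Suc (length l))" using ev_suc[OF ev_lenc[OF c]] by simp
  have r: "qrun e F (T (take n (seg f i)) (L n)) (L n) (L (Suc n)) (g n)" using run[of n] take_seg[of n i f] n by simp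
  have "prefix (L (Suc n)) (L i)" using Lmono[of "Suc n" i] n by simp
  hence pre: "prefix (L (Suc n)) l" using pl by (rule prefix_order.order_trans)
  have lp: "eval LOOPc [Suc (length l), n, length (L n), list_encode (seg f i), enc_log l]
      (stv (length (L n)) (length (L (Suc n))) (Suc (length l)))"
    by (rule loop[OF r pre]) (simp add: len_seg n less_imp_le)
  have bl: "length (L (Suc n)) \<le> length l" using prefix_length_le[OF pre] .
  have sv: "stv (length (L n)) (length (L (Suc n))) (Suc (length l)) = prod_encode (length (L (Suc n)), 1)"
    using bl by (simp add: stv_def)
  have "eval (Comp LOOPc [suc (lenc (Proj 3)), Proj 1, Proj 0, Proj 2, Proj 3]) ?E
      (prod_encode (length (L (Suc n)), 1))"
    apply (rule eval_Comp[where ys = "[Suc (length l), n, length (L n), list_encode (seg f i), enc_log l]"])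
     apply (simp only: list_all2_Cons list_all2_Nil simp_thms)
     apply (intro conjI M)
        apply (rule eval_P1)
       apply (rule eval_P0)
      apply (rule eval_P2)
     apply (rule eval_P3)
    using lp sv by simp
  hence "eval OSTEP ?E (fst (prod_decode (prod_encode (length (L (Suc n)), 1))))" unfolding OSTEP_def
    by (rule ev_dfst)
  moreover have "fst (prod_decode (prod_encode (length (L (Suc n)), 1::nat))) = length (L (Suc n))"
    by (simp only: prod_encode_inverse fst_conv)
  ultimately show "eval OSTEP ?E (length (L (Suc n)))" by simp
qed

lemma E'_eval: assumes pm: "prefix (L i) m"
  and v: "eval e [list_encode (T (seg f i) (L i)), enc_log m] v"
  shows "eval E' [list_encode (seg f i), enc_log m] v"
proof -
  let ?E = "[list_encode (seg f i), enc_log m]"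
  have s: "eval (Proj 0) ?E (list_encode (seg f i))" by (rule eval_P0)
  have c: "eval (Proj 1) ?E (list_encode (map penc m))" using eval_P1[of _ _ "[]"] by (simp add: enc_log_penc)
  have R: "eval RSTART ?E (length (L i))"
    unfolding RSTART_def
    apply (rule eval_Comp3[OF ev_lenc[OF s] s c])
    using rounds[OF pm, of i] by (simp add: len_seg enc_log_penc)
  have tk: "eval (takec RSTART (Proj 1)) ?E (enc_log (L i))"
    using ev_takec[OF R c] prefix_length_le[OF pm] pm
    by (simp add: enc_take) (metis append_eq_conv_conj prefix_def)
  have D: "eval (Comp t [Proj 0, takec RSTART (Proj 1)]) ?E (list_encode (T (seg f i) (L i)))"
    by (rule eval_Comp2[OF s tk tspec])
  show ?thesis unfolding E'_def
    by (rule eval_Comp2[OF D eval_P1[of _ _ "[]"] v])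
qed

lemma sim: "qrun e0 A D m m' h \<Longrightarrow> e0 = e \<Longrightarrow> D = T (seg f i) (L i) \<Longrightarrow> prefix (L i) m \<Longrightarrow> qrun E' A (seg f i) m m' h"
proof (induction rule: qrun.induct)
  case (qrun_hyp e' \<sigma> l h A)
  hence "eval E' [list_encode (seg f i), enc_log l] (2 * h)" using E'_eval by blast
  thus ?case by (rule qrun.qrun_hyp)
next
  case (qrun_query e' \<sigma> l x A l' h)
  have "prefix l (l @ [(x, x \<in> A)])" by simp
  hence "prefix (L i) (l @ [(x, x \<in> A)])" using qrun_query.prems(3) prefix_order.order_trans by blast
  hence "qrun E' A (seg f i) (l @ [(x, x \<in> A)]) l' h" using qrun_query by blast
  moreover have "eval E' [list_encode (seg f i), enc_log l] (2 * x + 1)"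
    using E'_eval qrun_query.hyps(1) qrun_query.prems by blast
  ultimately show ?case by (rule qrun.qrun_query[rotated])
qed

end
end

lemma TO_to_O: assumes "PMC_TO_learnable fam" shows "PMC_O_learnable fam"
proof -
  obtain e p T where T: "oteacher T" and Lrn: "\<forall>F \<in> range fam. \<forall>f. range f = F \<longrightarrow>
     (\<exists>L g. L 0 = [] \<and> (\<forall>i. qrun e F (T (seg f i) (L i)) (L i) (L (Suc i)) (g i)) \<and>
            good_stream fam F p g \<and> (\<forall>i. length (L i) \<le> poly p (mi fam F)))"
    using assms unfolding PMC_TO_learnable_def by (elim exE conjE)
  obtain t where t: "\<forall>\<sigma> l. eval t [list_encode \<sigma>, enc_log l] (list_encode (T \<sigma> l))"
    using T unfolding oteacher_def by (elim exE conjE)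
  interpret replay e t T proof qed (rule t[rule_format])
  show ?thesis unfolding PMC_O_learnable_def
  proof (intro exI[of _ E'] exI[of _ p] ballI allI impI)
    fix F and f :: "nat \<Rightarrow> nat" assume F: "F \<in> range fam" "range f = F"
    from Lrn[rule_format, OF F] obtain L g where L0: "L 0 = []"
      and r: "\<forall>i. qrun e F (T (seg f i) (L i)) (L i) (L (Suc i)) (g i)"
      and gs: "good_stream fam F p g" and ln: "\<forall>i. length (L i) \<le> poly p (mi fam F)"
      by (elim exE conjE)
    have "qrun E' F (seg f i) (L i) (L (Suc i)) (g i)" for i
      using sim[OF L0 r[rule_format], OF r[rule_format, of i] refl refl] by simp
    thus "\<exists>L g. L 0 = [] \<and> (\<forall>i. qrun E' F (seg f i) (L i) (L (Suc i)) (g i)) \<and>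
            good_stream fam F p g \<and> (\<forall>i. length (L i) \<le> poly p (mi fam F))"
      using L0 gs ln by (intro exI[of _ L] exI[of _ g] conjI allI) auto
  qed
qed

theorem theorem5p4:
  shows "PMC = PMC_T \<and> PMC_T \<subset> PMC_O \<and> PMC_O = PMC_TO"
proof (intro conjI)
  show "PMC = PMC_T" unfolding PMC_def PMC_T_def using PMC_to_T PMC_T_to_PMC by blast
  show "PMC_O = PMC_TO" unfolding PMC_O_def PMC_TO_def using O_to_TO TO_to_O by blast
  have sub: "PMC_T \<subseteq> PMC_O" unfolding PMC_T_def PMC_O_def using PMC_T_to_PMC PMC_to_O by blast
  have "fam0 \<in> PMC_O" unfolding PMC_O_def using fam0_indexed fam0_O by blast
  moreover have "fam0 \<notin> PMC_T" unfolding PMC_T_def using fam0_not_PMC PMC_T_to_PMC by blast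
  ultimately show "PMC_T \<subset> PMC_O" using sub by blast
qed

end
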